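(* Let $\lambda>0$ and $f:\mathbb{R}^n\to\mathbb{R}$ be twice continuously differentiable. Suppose there exist sequences $\{\varepsilon_g^k\}\downarrow0$, $\{\varepsilon_h^k\}\downarrow0$, a sequence $\{w^k\}\to w^*$, and a sequence $\{t_k\}\subseteq[t_{\min},t_{\max}]$ with $0<t_{\min}\le t_{\max}<+\infty$, such that for each $k$, $w^k$ is a strong $(\varepsilon_g^k,\varepsilon_h^k)$-2o point with respect to $t_k$, i.e. $\|\mathcal{G}_{t_k}(w^k)\|\le\varepsilon_g^k$ and $\lambda_{\min}((\nabla^2f(w^k))_{I^k_{\neq0}})\ge-\varepsilon_h^k$, where $I^k_{\neq0}=\{i:w^k_i\neq0\}$. Then $w^*$ satisfies $0\in\nabla f(w^* )+\lambda\partial\|w^*\|_1$ and $z^\top\nabla^2f(w^* )z\ge0$ for all $z\in\mathcal{C}(w^* )=\{z:z_i=0\text{ if }w^*_i=0\}$.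
   Context: $\mathcal{G}_t(x):=t(x-\mathrm{prox}_{\frac\lambda t\|\cdot\|_1}(x-\frac1t\nabla f(x)))$, where $\mathrm{prox}_h(z)=\arg\min_x\{h(x)+\frac12\|x-z\|^2\}$. For a symmetric matrix $A$ and index set $J$, $A_J$ is the principal submatrix indexed by $J$. *)

theory Defs
  imports "HOL-Analysis.Analysis"
begin

definition l1norm :: "real^'n \<Rightarrow> real" where
  "l1norm x = (\<Sum>i\<in>UNIV. \<bar>x $ i\<bar>)"

definition prox :: "(real^'n \<Rightarrow> real) \<Rightarrow> real^'n \<Rightarrow> real^'n" where
  "prox h z = (SOME x. \<forall>y. h x + (1/2) * (norm (x - z))\<^sup>2 \<le> h y + (1/2) * (norm (y - z))\<^sup>2)"

definition prox_grad_map ::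
  "(real^'n \<Rightarrow> real^'n) \<Rightarrow> real \<Rightarrow> real \<Rightarrow> real^'n \<Rightarrow> real^'n" where
  "prox_grad_map grad lam t x =
     t *\<^sub>R (x - prox (\<lambda>y. (lam / t) * l1norm y) (x - (1 / t) *\<^sub>R grad x))"

text \<open>Eigenvalues of the principal submatrix A_J (vectors supported on J).\<close>
definition principal_eigenvalues :: "real^'n^'n \<Rightarrow> 'n set \<Rightarrow> real set" where
  "principal_eigenvalues A J =
     {\<mu>. \<exists>v. v \<noteq> 0 \<and> (\<forall>i. i \<notin> J \<longrightarrow> v $ i = 0) \<and>
           (\<forall>i\<in>J. (A *v v) $ i = \<mu> * v $ i)}"

definition lambda_min :: "real^'n^'n \<Rightarrow> 'n set \<Rightarrow> real" where
  "lambda_min A J = Min (principal_eigenvalues A J)"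

definition support :: "real^'n \<Rightarrow> 'n set" where
  "support w = {i. w $ i \<noteq> 0}"

definition subdiff_l1 :: "real^'n \<Rightarrow> (real^'n) set" where
  "subdiff_l1 w = {s. \<forall>y. l1norm y \<ge> l1norm w + s \<bullet> (y - w)}"

definition critical_cone :: "real^'n \<Rightarrow> (real^'n) set" where
  "critical_cone w = {z. \<forall>i. w $ i = 0 \<longrightarrow> z $ i = 0}"

end

theory Submission imports Defs begin

lemma phi_deriv:
  fixes f :: "real^'n \<Rightarrow> real"
  assumes fderiv: "\<And>x. (f has_derivative (\<lambda>h. grad x \<bullet> h)) (at x)"
  shows "((\<lambda>t. f (x + t *\<^sub>R u + c)) has_real_derivative (grad (x + t *\<^sub>R u + c) \<bullet> u)) (at t)"
proof -
  have d1: "((\<lambda>t. x + t *\<^sub>R u + c) has_derivative (\<lambda>s. s *\<^sub>R u)) (at t)"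
    by (auto intro!: derivative_eq_intros)
  have "((\<lambda>t. f (x + t *\<^sub>R u + c)) has_derivative (\<lambda>s. grad (x + t *\<^sub>R u + c) \<bullet> (s *\<^sub>R u))) (at t)"
    using has_derivative_compose[OF d1 fderiv] by (simp add: o_def)
  moreover have "(\<lambda>s. grad (x + t *\<^sub>R u + c) \<bullet> (s *\<^sub>R u)) = (*) (grad (x + t *\<^sub>R u + c) \<bullet> u)"
    by (auto simp: mult.commute)
  ultimately show ?thesis unfolding has_field_derivative_def by simp
qed

lemma D_est:
  fixes f :: "real^'n \<Rightarrow> real"
  assumes fderiv: "\<And>x. (f has_derivative (\<lambda>h. grad x \<bullet> h)) (at x)"
    and gd: "(grad has_derivative (\<lambda>h. H *v h)) (at x)"
    and eps: "\<epsilon> > 0"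
  shows "\<exists>\<delta>>0. \<forall>h. 0 < h \<and> h < \<delta> \<longrightarrow>
     \<bar>(f (x + h *\<^sub>R u + h *\<^sub>R v) - f (x + h *\<^sub>R u) - f (x + h *\<^sub>R v) + f x) - h^2 * (u \<bullet> (H *v v))\<bar> \<le> \<epsilon> * h^2"
proof -
  define K where "K = norm u * (2 * norm u + norm v) + 1"
  have Kpos: "K > 0" unfolding K_def by (simp add: add_nonneg_pos)
  define e where "e = \<epsilon> / K"
  have epos: "e > 0" using eps Kpos by (simp add: e_def)
  obtain d where d: "d > 0" and dd: "\<And>y. norm (y - x) < d \<Longrightarrow>
      norm (grad y - grad x - H *v (y - x)) \<le> e * norm (y - x)"
    using gd epos unfolding has_derivative_at_alt by blast
  have dd': "norm (grad (x + y) - grad x - H *v y) \<le> e * norm y" if "norm y < d" for y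
    using dd[of "x + y"] that by simp
  define \<delta> where "\<delta> = d / (norm u + norm v + 1)"
  have \<delta>pos: "\<delta> > 0" using d by (simp add: \<delta>_def add_nonneg_pos)
  show ?thesis
  proof (intro exI[of _ \<delta>] conjI allI impI \<delta>pos)
    fix h :: real assume h: "0 < h \<and> h < \<delta>"
    define \<phi> where "\<phi> t = f (x + t *\<^sub>R u + h *\<^sub>R v) - f (x + t *\<^sub>R u + 0)" for t
    define \<phi>' where "\<phi>' t = grad (x + t *\<^sub>R u + h *\<^sub>R v) \<bullet> u - grad (x + t *\<^sub>R u + 0) \<bullet> u" for t
    have "\<forall>t. 0 \<le> t \<and> t \<le> h \<longrightarrow> (\<phi> has_real_derivative \<phi>' t) (at t)"
      unfolding \<phi>_def \<phi>'_def
      by (intro allI impI DERIV_diff phi_deriv[OF fderiv])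
    then obtain \<xi> where xi: "0 < \<xi>" "\<xi> < h" and mv: "\<phi> h - \<phi> 0 = (h - 0) * \<phi>' \<xi>"
      using MVT2[of 0 h \<phi> \<phi>'] h by auto
    have Deq: "f (x + h *\<^sub>R u + h *\<^sub>R v) - f (x + h *\<^sub>R u) - f (x + h *\<^sub>R v) + f x = h * \<phi>' \<xi>"
      using mv unfolding \<phi>_def by (simp add: algebra_simps)
    define y1 where "y1 = \<xi> *\<^sub>R u + h *\<^sub>R v"
    define y2 where "y2 = \<xi> *\<^sub>R u"
    have hd: "h * (norm u + norm v) < d"
    proof -
      have "h * (norm u + norm v) \<le> h * (norm u + norm v + 1)" using h by simp
      also have "\<dots> < \<delta> * (norm u + norm v + 1)"
        using h by (intro mult_strict_right_mono) (auto simp: add_nonneg_pos)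
      also have "\<dots> = d" proof -
        have "norm u + norm v + 1 > 0" by (simp add: add_nonneg_pos)
        thus ?thesis unfolding \<delta>_def by simp
      qed
      finally show ?thesis .
    qed
    have n1: "norm y1 \<le> h * (norm u + norm v)"
    proof -
      have "norm y1 \<le> \<xi> * norm u + h * norm v" unfolding y1_def
        using norm_triangle_ineq[of "\<xi> *\<^sub>R u" "h *\<^sub>R v"] xi h by simp
      also have "\<dots> \<le> h * norm u + h * norm v" using xi by (simp add: mult_right_mono)
      finally show ?thesis by (simp add: algebra_simps)
    qed
    have n2: "norm y2 \<le> h * norm u" unfolding y2_def using xi by (simp add: mult_right_mono)
    have b1: "norm (grad (x + y1) - grad x - H *v y1) \<le> e * norm y1"
      using dd' n1 hd by simp
    have b2: "norm (grad (x + y2) - grad x - H *v y2) \<le> e * norm y2"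
      using dd' n2 hd by (smt (verit) mult_left_mono norm_ge_zero h)
    have key: "\<phi>' \<xi> - h * (u \<bullet> (H *v v)) =
       u \<bullet> ((grad (x + y1) - grad x - H *v y1) - (grad (x + y2) - grad x - H *v y2))"
      unfolding \<phi>'_def y1_def y2_def
      by (simp add: matrix_vector_right_distrib matrix_vector_mult_scaleR inner_diff_right
            inner_add_right inner_commute add.assoc algebra_simps)
    have "\<bar>\<phi>' \<xi> - h * (u \<bullet> (H *v v))\<bar> \<le> norm u * (e * norm y1 + e * norm y2)"
    proof -
      have "\<bar>\<phi>' \<xi> - h * (u \<bullet> (H *v v))\<bar> \<le> norm u *
          norm ((grad (x + y1) - grad x - H *v y1) - (grad (x + y2) - grad x - H *v y2))"
        unfolding key by (rule Cauchy_Schwarz_ineq2)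
      also have "\<dots> \<le> norm u * (e * norm y1 + e * norm y2)"
        by (intro mult_left_mono order.trans[OF norm_triangle_ineq4] add_mono b1 b2) auto
      finally show ?thesis .
    qed
    also have "\<dots> \<le> norm u * (e * (h * (norm u + norm v)) + e * (h * norm u))"
      using n1 n2 epos by (intro mult_left_mono add_mono) auto
    also have "\<dots> = h * e * (norm u * (2 * norm u + norm v))" by (simp add: algebra_simps)
    also have "\<dots> \<le> h * e * K" unfolding K_def using h epos by simp
    also have "\<dots> = h * \<epsilon>" unfolding e_def using Kpos by simp
    finally have "\<bar>\<phi>' \<xi> - h * (u \<bullet> (H *v v))\<bar> \<le> h * \<epsilon>" .
    hence "h * \<bar>\<phi>' \<xi> - h * (u \<bullet> (H *v v))\<bar> \<le> h * (h * \<epsilon>)" using h by (simp add: mult_left_mono)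
    moreover have "h * \<bar>\<phi>' \<xi> - h * (u \<bullet> (H *v v))\<bar> = \<bar>h * \<phi>' \<xi> - h^2 * (u \<bullet> (H *v v))\<bar>"
    proof -
      have "h * \<phi>' \<xi> - h^2 * (u \<bullet> (H *v v)) = h * (\<phi>' \<xi> - h * (u \<bullet> (H *v v)))"
        by (simp add: power2_eq_square algebra_simps)
      thus ?thesis using h by (simp add: abs_mult)
    qed
    ultimately show "\<bar>(f (x + h *\<^sub>R u + h *\<^sub>R v) - f (x + h *\<^sub>R u) - f (x + h *\<^sub>R v) + f x) - h^2 * (u \<bullet> (H *v v))\<bar> \<le> \<epsilon> * h^2"
      unfolding Deq by (simp add: power2_eq_square algebra_simps)
  qed
qed

lemma hess_sym:
  fixes f :: "real^'n \<Rightarrow> real"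
  assumes fderiv: "\<And>x. (f has_derivative (\<lambda>h. grad x \<bullet> h)) (at x)"
    and gd: "(grad has_derivative (\<lambda>h. H *v h)) (at x)"
  shows "u \<bullet> (H *v v) = v \<bullet> (H *v u)"
proof (rule ccontr)
  assume ne: "u \<bullet> (H *v v) \<noteq> v \<bullet> (H *v u)"
  define \<epsilon> where "\<epsilon> = \<bar>u \<bullet> (H *v v) - v \<bullet> (H *v u)\<bar> / 3"
  have ep: "\<epsilon> > 0" using ne by (simp add: \<epsilon>_def)
  obtain d1 where d1: "d1 > 0" and e1: "\<And>h. 0 < h \<and> h < d1 \<Longrightarrow>
     \<bar>(f (x + h *\<^sub>R u + h *\<^sub>R v) - f (x + h *\<^sub>R u) - f (x + h *\<^sub>R v) + f x) - h^2 * (u \<bullet> (H *v v))\<bar> \<le> \<epsilon> * h^2"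
    using D_est[OF fderiv gd ep, of u v] by blast
  obtain d2 where d2: "d2 > 0" and e2: "\<And>h. 0 < h \<and> h < d2 \<Longrightarrow>
     \<bar>(f (x + h *\<^sub>R v + h *\<^sub>R u) - f (x + h *\<^sub>R v) - f (x + h *\<^sub>R u) + f x) - h^2 * (v \<bullet> (H *v u))\<bar> \<le> \<epsilon> * h^2"
    using D_est[OF fderiv gd ep, of v u] by blast
  define h where "h = min d1 d2 / 2"
  have h: "0 < h" "h < d1" "h < d2" using d1 d2 by (auto simp: h_def)
  have "x + h *\<^sub>R v + h *\<^sub>R u = x + h *\<^sub>R u + h *\<^sub>R v" by (simp add: algebra_simps)
  hence "\<bar>h^2 * (u \<bullet> (H *v v)) - h^2 * (v \<bullet> (H *v u))\<bar> \<le> 2 * \<epsilon> * h^2"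
    using e1[of h] e2[of h] h by (simp add: algebra_simps)
  hence "h^2 * \<bar>u \<bullet> (H *v v) - v \<bullet> (H *v u)\<bar> \<le> h^2 * (2 * \<epsilon>)"
  proof -
    assume a: "\<bar>h^2 * (u \<bullet> (H *v v)) - h^2 * (v \<bullet> (H *v u))\<bar> \<le> 2 * \<epsilon> * h^2"
    have "h^2 * (u \<bullet> (H *v v)) - h^2 * (v \<bullet> (H *v u)) = h^2 * (u \<bullet> (H *v v) - v \<bullet> (H *v u))"
      by (simp add: algebra_simps)
    hence b: "\<bar>h^2 * (u \<bullet> (H *v v) - v \<bullet> (H *v u))\<bar> \<le> 2 * \<epsilon> * h^2" using a by metis
    have c: "\<bar>h^2 * (u \<bullet> (H *v v) - v \<bullet> (H *v u))\<bar> = h^2 * \<bar>u \<bullet> (H *v v) - v \<bullet> (H *v u)\<bar>"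
      by (simp add: abs_mult)
    show ?thesis using b unfolding c by (simp add: mult_ac)
  qed
  hence "\<bar>u \<bullet> (H *v v) - v \<bullet> (H *v u)\<bar> \<le> 2 * \<epsilon>" using h by simp
  thus False using ep unfolding \<epsilon>_def by simp
qed



lemma eig_inner:
  fixes A :: "real^'n^'n"
  assumes "\<forall>i. i \<notin> J \<longrightarrow> y $ i = 0" and "\<forall>i\<in>J. (A *v v) $ i = \<mu> * v $ i"
  shows "y \<bullet> (A *v v) = \<mu> * (y \<bullet> v)"
proof -
  have h: "\<And>i. y $ i * (A *v v) $ i = \<mu> * (y $ i * v $ i)"
    using assms by (metis mult.left_commute mult_zero_left)
  show ?thesis unfolding inner_vec_def sum_distrib_left by (simp add: h)
qed

lemma closed_S: "closed {x::real^'n. norm x = 1 \<and> (\<forall>i. i \<notin> J \<longrightarrow> x $ i = 0)}"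
  by (intro closed_Collect_conj closed_Collect_eq closed_Collect_all closed_Collect_imp)
     (auto intro!: continuous_intros)

lemma cont_q: "continuous_on UNIV (\<lambda>x::real^'n. x \<bullet> (A *v x))"
  by (intro continuous_intros)

lemma eig_finite:
  fixes A :: "real^'n^'n"
  assumes sym: "\<And>u v. u \<bullet> (A *v v) = v \<bullet> (A *v u)"
  shows "finite (principal_eigenvalues A J)"
proof -
  let ?E = "principal_eigenvalues A J"
  define P where "P \<mu> v = (v \<noteq> 0 \<and> (\<forall>i. i \<notin> J \<longrightarrow> v $ i = 0) \<and> (\<forall>i\<in>J. (A *v v) $ i = \<mu> * v $ i))" for \<mu> v
  define V where "V \<mu> = (SOME v. P \<mu> v)" for \<mu>
  have PV: "P \<mu> (V \<mu>)" if "\<mu> \<in> ?E" for \<mu>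
    using that unfolding V_def principal_eigenvalues_def P_def[symmetric] by (auto intro: someI_ex)
  have orth: "V \<mu> \<bullet> V \<mu>' = 0" if "\<mu> \<in> ?E" "\<mu>' \<in> ?E" "\<mu> \<noteq> \<mu>'" for \<mu> \<mu>'
  proof -
    have p1: "\<forall>i. i \<notin> J \<longrightarrow> V \<mu> $ i = 0" "\<forall>i\<in>J. (A *v V \<mu>) $ i = \<mu> * V \<mu> $ i"
      using PV[OF that(1)] unfolding P_def by auto
    have p2: "\<forall>i. i \<notin> J \<longrightarrow> V \<mu>' $ i = 0" "\<forall>i\<in>J. (A *v V \<mu>') $ i = \<mu>' * V \<mu>' $ i"
      using PV[OF that(2)] unfolding P_def by auto
    have a: "V \<mu>' \<bullet> (A *v V \<mu>) = \<mu> * (V \<mu>' \<bullet> V \<mu>)"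
      by (rule eig_inner[OF p2(1) p1(2)])
    have b: "V \<mu> \<bullet> (A *v V \<mu>') = \<mu>' * (V \<mu> \<bullet> V \<mu>')"
      by (rule eig_inner[OF p1(1) p2(2)])
    have "\<mu> * (V \<mu> \<bullet> V \<mu>') = \<mu>' * (V \<mu> \<bullet> V \<mu>')"
      using a b sym[of "V \<mu>'" "V \<mu>"] by (metis inner_commute)
    thus ?thesis using that(3) by simp
  qed
  have inj: "inj_on V ?E"
  proof (rule inj_onI, rule ccontr)
    fix \<mu> \<mu>' assume h: "\<mu> \<in> ?E" "\<mu>' \<in> ?E" "V \<mu> = V \<mu>'" "\<mu> \<noteq> \<mu>'"
    have "V \<mu> \<bullet> V \<mu> = 0" using orth[OF h(1,2,4)] h(3) by simp
    thus False using PV[OF h(1)] unfolding P_def by simp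
  qed
  have "pairwise orthogonal (V ` ?E)"
    unfolding pairwise_def orthogonal_def using orth by auto
  moreover have "0 \<notin> V ` ?E" using PV unfolding P_def by auto
  ultimately have "independent (V ` ?E)" by (rule pairwise_orthogonal_independent)
  hence "finite (V ` ?E)" using independent_bound by blast
  thus ?thesis using finite_imageD inj by blast
qed

lemma eig_lower:
  fixes A :: "real^'n^'n"
  assumes sym: "\<And>u v. u \<bullet> (A *v v) = v \<bullet> (A *v u)" and J: "J \<noteq> {}"
    and x: "\<forall>i. i \<notin> J \<longrightarrow> x $ i = 0"
  shows "x \<bullet> (A *v x) \<ge> lambda_min A J * (norm x)^2"
proof -
  define S where "S = {x::real^'n. norm x = 1 \<and> (\<forall>i. i \<notin> J \<longrightarrow> x $ i = 0)}"
  have cS: "compact S"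
  proof -
    have "bounded S" unfolding S_def bounded_iff by auto
    thus ?thesis using closed_S[of J] unfolding S_def[symmetric] by (simp add: compact_eq_bounded_closed)
  qed
  obtain j where j: "j \<in> J" using J by auto
  have "axis j 1 \<in> S" unfolding S_def using j by (auto simp: norm_axis_1) (auto simp: axis_def)
  hence neS: "S \<noteq> {}" by auto
  obtain v where vS: "v \<in> S" and vmin: "\<And>y. y \<in> S \<Longrightarrow> v \<bullet> (A *v v) \<le> y \<bullet> (A *v y)"
    using continuous_attains_inf[OF cS neS continuous_on_subset[OF cont_q[of A]]] by blast
  define \<mu> where "\<mu> = v \<bullet> (A *v v)"
  have lowq: "y \<bullet> (A *v y) \<ge> \<mu> * (norm y)^2" if y: "\<forall>i. i \<notin> J \<longrightarrow> y $ i = 0" for y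
  proof (cases "y = 0")
    case True thus ?thesis by simp
  next
    case False
    define y' where "y' = (1 / norm y) *\<^sub>R y"
    have "y' \<in> S" unfolding S_def y'_def using y False by auto
    hence "\<mu> \<le> y' \<bullet> (A *v y')" using vmin unfolding \<mu>_def by blast
    also have "y' \<bullet> (A *v y') = (y \<bullet> (A *v y)) / (norm y)^2"
      unfolding y'_def by (simp add: matrix_vector_mult_scaleR power2_eq_square)
    finally show ?thesis using False by (simp add: field_simps)
  qed
  have vJ: "\<forall>i. i \<notin> J \<longrightarrow> v $ i = 0" and vn: "norm v = 1" using vS unfolding S_def by auto
  have ueq: "u \<bullet> (A *v v) - \<mu> * (u \<bullet> v) = 0" if u: "\<forall>i. i \<notin> J \<longrightarrow> u $ i = 0" for u
  proof (rule ccontr)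
    define a where "a = u \<bullet> (A *v v) - \<mu> * (u \<bullet> v)"
    define c where "c = u \<bullet> (A *v u) - \<mu> * (norm u)^2"
    assume "u \<bullet> (A *v v) - \<mu> * (u \<bullet> v) \<noteq> 0"
    hence a0: "a \<noteq> 0" unfolding a_def .
    have c0: "c \<ge> 0" using lowq[OF u] unfolding c_def by simp
    have expand: "2 * e * a + e^2 * c \<ge> 0" for e
    proof -
      have "\<forall>i. i \<notin> J \<longrightarrow> (v + e *\<^sub>R u) $ i = 0" using u vJ by simp
      hence "(v + e *\<^sub>R u) \<bullet> (A *v (v + e *\<^sub>R u)) \<ge> \<mu> * (norm (v + e *\<^sub>R u))^2" by (rule lowq)
      moreover have "(v + e *\<^sub>R u) \<bullet> (A *v (v + e *\<^sub>R u)) =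
          \<mu> + 2 * e * (u \<bullet> (A *v v)) + e^2 * (u \<bullet> (A *v u))"
        using sym[of v u] unfolding \<mu>_def
        by (simp add: matrix_vector_right_distrib matrix_vector_mult_scaleR inner_add_left inner_add_right
            power2_eq_square algebra_simps)
      moreover have "(norm (v + e *\<^sub>R u))^2 = 1 + 2 * e * (u \<bullet> v) + e^2 * (norm u)^2"
      proof -
        have vv: "v \<bullet> v = 1" using vn by (simp add: norm_eq_1)
        have uu: "u \<bullet> u = (norm u)^2" by (simp add: power2_norm_eq_inner)
        have "(norm (v + e *\<^sub>R u))^2 = (v + e *\<^sub>R u) \<bullet> (v + e *\<^sub>R u)" by (simp add: power2_norm_eq_inner)
        also have "\<dots> = v \<bullet> v + 2 * e * (u \<bullet> v) + e^2 * (u \<bullet> u)"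
          by (simp add: inner_add_left inner_add_right inner_commute power2_eq_square algebra_simps)
        finally show ?thesis unfolding vv uu .
      qed
      ultimately show ?thesis unfolding a_def c_def by (simp add: algebra_simps)
    qed
    define e where "e = - a / (c + 1)"
    have "2 * e * a + e^2 * c = a^2 * (- c - 2) / (c + 1)^2"
    proof -
      have c1: "c + 1 \<noteq> 0" using c0 by simp
      show ?thesis unfolding e_def using c1 by (simp add: divide_simps power2_eq_square, algebra)
    qed
    also have "\<dots> < 0" using a0 c0 by (intro divide_neg_pos mult_pos_neg) auto
    finally show False using expand[of e] by simp
  qed
  have muE: "\<mu> \<in> principal_eigenvalues A J"
    unfolding principal_eigenvalues_def
  proof (intro CollectI exI[of _ v] conjI ballI)
    show "v \<noteq> 0" using vn by auto
    show "\<forall>i. i \<notin> J \<longrightarrow> v $ i = 0" by (rule vJ)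
    fix i assume i: "i \<in> J"
    have "axis i 1 \<bullet> (A *v v) - \<mu> * (axis i 1 \<bullet> v) = 0"
      using i by (intro ueq) (auto simp: axis_def)
    thus "(A *v v) $ i = \<mu> * v $ i" by (simp add: inner_axis')
  qed
  have "lambda_min A J = \<mu>"
    unfolding lambda_min_def
  proof (rule Min_eqI[OF eig_finite[OF sym] _ muE])
    fix \<mu>' assume "\<mu>' \<in> principal_eigenvalues A J"
    then obtain w where w: "w \<noteq> 0" "\<forall>i. i \<notin> J \<longrightarrow> w $ i = 0" "\<forall>i\<in>J. (A *v w) $ i = \<mu>' * w $ i"
      unfolding principal_eigenvalues_def by auto
    have "\<mu>' * (norm w)^2 = w \<bullet> (A *v w)"
      using eig_inner[OF w(2) w(3)] by (simp add: power2_norm_eq_inner)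
    also have "\<dots> \<ge> \<mu> * (norm w)^2" using lowq[OF w(2)] .
    finally show "\<mu> \<le> \<mu>'" using w(1) by simp
  qed
  thus ?thesis using lowq[OF x] by simp
qed



lemma subgrad_crit:
  assumes "\<And>i. s $ i * x $ i = \<bar>x $ i\<bar> \<and> \<bar>s $ i\<bar> \<le> 1"
  shows "l1norm y \<ge> l1norm x + s \<bullet> (y - x)"
proof -
  have "s $ i * (y $ i - x $ i) \<le> \<bar>y $ i\<bar> - \<bar>x $ i\<bar>" for i
  proof -
    have "s $ i * y $ i \<le> \<bar>s $ i\<bar> * \<bar>y $ i\<bar>" by (metis abs_ge_self abs_mult)
    also have "\<dots> \<le> \<bar>y $ i\<bar>" using assms[of i] by (simp add: mult_left_le_one_le)
    finally show ?thesis using assms[of i] by (simp add: right_diff_distrib)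
  qed
  hence "(\<Sum>i\<in>UNIV. s $ i * (y $ i - x $ i)) \<le> (\<Sum>i\<in>UNIV. \<bar>y $ i\<bar> - \<bar>x $ i\<bar>)"
    by (intro sum_mono)
  thus ?thesis unfolding l1norm_def inner_vec_def by (simp add: sum_subtractf)
qed

lemma l1_convex:
  assumes "0 \<le> e" "e \<le> 1"
  shows "l1norm ((1 - e) *\<^sub>R p + e *\<^sub>R y) \<le> (1 - e) * l1norm p + e * l1norm y"
proof -
  have "\<bar>(1 - e) * p $ i + e * y $ i\<bar> \<le> (1 - e) * \<bar>p $ i\<bar> + e * \<bar>y $ i\<bar>" for i
  proof -
    have "\<bar>(1 - e) * p $ i + e * y $ i\<bar> \<le> \<bar>(1 - e) * p $ i\<bar> + \<bar>e * y $ i\<bar>" by (rule abs_triangle_ineq)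
    also have "\<dots> = (1 - e) * \<bar>p $ i\<bar> + e * \<bar>y $ i\<bar>" using assms by (simp add: abs_mult)
    finally show ?thesis .
  qed
  hence "(\<Sum>i\<in>UNIV. \<bar>(1 - e) * p $ i + e * y $ i\<bar>) \<le> (\<Sum>i\<in>UNIV. (1 - e) * \<bar>p $ i\<bar> + e * \<bar>y $ i\<bar>)"
    by (intro sum_mono)
  thus ?thesis unfolding l1norm_def by (simp add: sum.distrib sum_distrib_left)
qed

lemma prox_exists:
  fixes z :: "real^'n"
  assumes c: "c > 0"
  shows "\<exists>x. \<forall>y. (\<lambda>y. c * l1norm y) x + (1/2) * (norm (x - z))\<^sup>2 \<le> (\<lambda>y. c * l1norm y) y + (1/2) * (norm (y - z))\<^sup>2"
proof -
  define x :: "real^'n" where "x = (\<chi> i. if z $ i > c then z $ i - c else if z $ i < - c then z $ i + c else 0)"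
  define s where "s = (1 / c) *\<^sub>R (z - x)"
  have sx: "s $ i * x $ i = \<bar>x $ i\<bar> \<and> \<bar>s $ i\<bar> \<le> 1" for i
    using c unfolding s_def x_def by (auto simp: abs_if field_simps)
  show ?thesis
  proof (intro exI allI)
    fix y
    have a: "l1norm y \<ge> l1norm x + s \<bullet> (y - x)" by (rule subgrad_crit[OF sx])
    have cs: "c *\<^sub>R s = z - x" unfolding s_def using c by simp
    have "c * l1norm y \<ge> c * l1norm x + (z - x) \<bullet> (y - x)"
      using mult_left_mono[OF a, of c] c unfolding cs[symmetric] by (simp add: algebra_simps)
    moreover have "(norm (y - z))\<^sup>2 \<ge> (norm (x - z))\<^sup>2 - 2 * ((z - x) \<bullet> (y - x))"
    proof -
      have "(norm (y - z))\<^sup>2 = (norm ((y - x) + (x - z)))\<^sup>2" by simp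
      also have "\<dots> = (norm (y - x))\<^sup>2 + 2 * ((y - x) \<bullet> (x - z)) + (norm (x - z))\<^sup>2"
        by (simp only: power2_norm_eq_inner inner_add_left inner_add_right inner_commute[of "x - z" "y - x"])
      finally show ?thesis
        by (simp add: inner_diff_left inner_diff_right inner_commute algebra_simps)
    qed
    ultimately show "(\<lambda>y. c * l1norm y) x + (1/2) * (norm (x - z))\<^sup>2 \<le> (\<lambda>y. c * l1norm y) y + (1/2) * (norm (y - z))\<^sup>2"
      by simp
  qed
qed

lemma small_eps:
  fixes A B C :: real
  assumes C: "C \<ge> 0" and h: "\<And>e. 0 < e \<Longrightarrow> e \<le> 1 \<Longrightarrow> A \<le> B + e * C"
  shows "A \<le> B"
proof (rule ccontr)
  assume "\<not> A \<le> B"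
  hence d: "A - B > 0" by simp
  define e where "e = min 1 ((A - B) / (C + 1))"
  have e: "0 < e" "e \<le> 1" using d C by (auto simp: e_def)
  have "e * C \<le> (A - B) / (C + 1) * C" using C by (intro mult_right_mono) (auto simp: e_def)
  also have "\<dots> < A - B" using d C by (simp add: field_simps)
  finally show False using h[OF e] by simp
qed

lemma prox_opt:
  fixes z :: "real^'n"
  assumes c: "c > 0"
  defines "p \<equiv> prox (\<lambda>y. c * l1norm y) z"
  shows "l1norm y \<ge> l1norm p + ((1 / c) *\<^sub>R (z - p)) \<bullet> (y - p)"
proof -
  have pmin: "\<And>x. c * l1norm p + (1/2) * (norm (p - z))\<^sup>2 \<le> c * l1norm x + (1/2) * (norm (x - z))\<^sup>2"
    using someI_ex[OF prox_exists[OF c, of z]] unfolding p_def prox_def by simp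
  have main: "c * l1norm p \<le> c * l1norm y + (p - z) \<bullet> (y - p) + e * ((1/2) * (norm (y - p))\<^sup>2)"
    if e: "0 < e" "e \<le> 1" for e
  proof -
    define x where "x = (1 - e) *\<^sub>R p + e *\<^sub>R y"
    have x': "x - z = (p - z) + e *\<^sub>R (y - p)" unfolding x_def by (simp add: algebra_simps)
    have nx: "(norm (x - z))\<^sup>2 = (norm (p - z))\<^sup>2 + 2 * e * ((p - z) \<bullet> (y - p)) + e^2 * (norm (y - p))\<^sup>2"
      unfolding x' by (simp only: power2_norm_eq_inner inner_add_left inner_add_right inner_scaleR_left
          inner_scaleR_right inner_commute[of "y - p" "p - z"]) (simp add: power2_eq_square algebra_simps)
    have cx: "c * l1norm x \<le> c * ((1 - e) * l1norm p + e * l1norm y)"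
      unfolding x_def using l1_convex[of e p y] e c by (intro mult_left_mono) auto
    have "c * l1norm p \<le> c * ((1 - e) * l1norm p + e * l1norm y) + e * ((p - z) \<bullet> (y - p)) + e^2 * ((1/2) * (norm (y - p))\<^sup>2)"
      using pmin[of x] cx unfolding nx by (simp add: algebra_simps)
    hence "e * (c * l1norm p) \<le> e * (c * l1norm y + (p - z) \<bullet> (y - p) + e * ((1/2) * (norm (y - p))\<^sup>2))"
      by (simp add: algebra_simps power2_eq_square)
    thus ?thesis using e by simp
  qed
  have "c * l1norm p \<le> c * l1norm y + (p - z) \<bullet> (y - p)"
    by (rule small_eps[OF _ main]) auto
  hence "c * l1norm p + (z - p) \<bullet> (y - p) \<le> c * l1norm y"
    by (simp add: inner_diff_left algebra_simps)
  hence "(1/c) * (c * l1norm p + (z - p) \<bullet> (y - p)) \<le> (1/c) * (c * l1norm y)"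
    using c by (intro mult_left_mono) auto
  thus ?thesis using c by (simp add: algebra_simps)
qed

lemma l1_cont: "continuous_on UNIV (l1norm :: real^'n \<Rightarrow> real)"
  unfolding l1norm_def[abs_def] by (intro continuous_intros)

lemma quad_tendsto:
  fixes M :: "nat \<Rightarrow> real^'n^'n"
  assumes "M \<longlonglongrightarrow> M0"
  shows "(\<lambda>k. z \<bullet> (M k *v z)) \<longlonglongrightarrow> z \<bullet> (M0 *v z)"
  unfolding inner_vec_def matrix_vector_mult_def
  by (intro tendsto_intros assms)

theorem lemma1:
  fixes f :: "real^'n \<Rightarrow> real"
    and grad :: "real^'n \<Rightarrow> real^'n"
    and hess :: "real^'n \<Rightarrow> real^'n^'n"
    and lam tmin tmax :: real
    and eg eh t :: "nat \<Rightarrow> real"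
    and w :: "nat \<Rightarrow> real^'n"
    and wstar :: "real^'n"
  assumes lam: "lam > 0"
    and fderiv: "\<And>x. (f has_derivative (\<lambda>h. grad x \<bullet> h)) (at x)"
    and gderiv: "\<And>x. (grad has_derivative (\<lambda>h. hess x *v h)) (at x)"
    and hcont: "continuous_on UNIV hess"
    and eg_dec: "decseq eg" and eg_lim: "eg \<longlonglongrightarrow> 0"
    and eh_dec: "decseq eh" and eh_lim: "eh \<longlonglongrightarrow> 0"
    and w_lim: "w \<longlonglongrightarrow> wstar"
    and tbounds: "0 < tmin" "tmin \<le> tmax" "\<And>k. t k \<in> {tmin..tmax}"
    and first_order: "\<And>k. norm (prox_grad_map grad lam (t k) (w k)) \<le> eg k"
    and second_order: "\<And>k. support (w k) \<noteq> {} \<Longrightarrow>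
                          lambda_min (hess (w k)) (support (w k)) \<ge> - eh k"
  shows "(\<exists>s\<in>subdiff_l1 wstar. grad wstar + lam *\<^sub>R s = 0) \<and>
         (\<forall>z\<in>critical_cone wstar. z \<bullet> (hess wstar *v z) \<ge> 0)"
proof
  have tpos: "t k > 0" for k using tbounds(1) tbounds(3)[of k] by auto
  define G where "G k = prox_grad_map grad lam (t k) (w k)" for k
  define p where "p k = prox (\<lambda>y. (lam / t k) * l1norm y) (w k - (1 / t k) *\<^sub>R grad (w k))" for k
  define s where "s k = (1 / lam) *\<^sub>R (G k - grad (w k))" for k
  have Gp: "G k = t k *\<^sub>R (w k - p k)" for k unfolding G_def p_def prox_grad_map_def by simp
  have pw: "p k = w k - (1 / t k) *\<^sub>R G k" for k using tpos[of k] unfolding Gp by simp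
  have sub: "l1norm y \<ge> l1norm (p k) + s k \<bullet> (y - p k)" for k y
  proof -
    have c: "lam / t k > 0" using lam tpos[of k] by simp
    have A: "l1norm y \<ge> l1norm (p k) + ((1 / (lam / t k)) *\<^sub>R ((w k - (1 / t k) *\<^sub>R grad (w k)) - p k)) \<bullet> (y - p k)"
      unfolding p_def by (rule prox_opt[OF c])
    have eq: "(1 / (lam / t k)) *\<^sub>R ((w k - (1 / t k) *\<^sub>R grad (w k)) - p k) = s k"
      unfolding s_def Gp using tpos[of k] lam by (simp add: algebra_simps)
    show ?thesis using A unfolding eq .
  qed
  have G0: "G \<longlonglongrightarrow> 0"
    by (rule Lim_null_comparison[OF _ eg_lim]) (simp add: G_def first_order)
  have Gt0: "(\<lambda>k. (1 / t k) *\<^sub>R G k) \<longlonglongrightarrow> 0"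
  proof (rule Lim_null_comparison)
    show "\<forall>\<^sub>F k in sequentially. norm ((1 / t k) *\<^sub>R G k) \<le> (1 / tmin) * norm (G k)"
    proof (intro always_eventually allI)
      fix k
      have "1 / t k \<le> 1 / tmin" using tbounds(1) tbounds(3)[of k] by (auto simp: field_simps)
      thus "norm ((1 / t k) *\<^sub>R G k) \<le> (1 / tmin) * norm (G k)"
        using tpos[of k] mult_right_mono[of "1 / t k" "1 / tmin" "norm (G k)"] by simp
    qed
    show "(\<lambda>k. (1 / tmin) * norm (G k)) \<longlonglongrightarrow> 0"
      using tendsto_mult_right_zero[OF G0[THEN tendsto_norm_zero], of "1 / tmin"] by simp
  qed
  have p_lim: "p \<longlonglongrightarrow> wstar"
    unfolding pw using tendsto_diff[OF w_lim Gt0] by simp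
  have gcont: "continuous_on UNIV grad"
    by (rule has_derivative_continuous_on) (use gderiv in auto)
  have grad_lim: "(\<lambda>k. grad (w k)) \<longlonglongrightarrow> grad wstar"
    by (rule continuous_on_tendsto_compose[OF gcont w_lim]) auto
  define s0 where "s0 = (1 / lam) *\<^sub>R (0 - grad wstar)"
  have s_lim: "s \<longlonglongrightarrow> s0"
    unfolding s_def s0_def by (intro tendsto_intros G0 grad_lim)
  have "s0 \<in> subdiff_l1 wstar"
    unfolding subdiff_l1_def
  proof (intro CollectI allI)
    fix y
    have l1p: "(\<lambda>k. l1norm (p k)) \<longlonglongrightarrow> l1norm wstar"
      by (rule continuous_on_tendsto_compose[OF l1_cont p_lim]) auto
    have "(\<lambda>k. l1norm (p k) + s k \<bullet> (y - p k)) \<longlonglongrightarrow> l1norm wstar + s0 \<bullet> (y - wstar)"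
      by (intro tendsto_intros l1p s_lim p_lim)
    thus "l1norm y \<ge> l1norm wstar + s0 \<bullet> (y - wstar)"
      by (rule tendsto_le[OF trivial_limit_sequentially tendsto_const]) (simp add: sub)
  qed
  moreover have "grad wstar + lam *\<^sub>R s0 = 0" unfolding s0_def using lam by simp
  ultimately show "\<exists>s\<in>subdiff_l1 wstar. grad wstar + lam *\<^sub>R s = 0" by blast
next
  show "\<forall>z\<in>critical_cone wstar. z \<bullet> (hess wstar *v z) \<ge> 0"
  proof
    fix z assume z: "z \<in> critical_cone wstar"
    show "z \<bullet> (hess wstar *v z) \<ge> 0"
    proof (cases "z = 0")
      case True thus ?thesis by simp
    next
      case False
      then obtain j where j: "z $ j \<noteq> 0" by (metis vec_eq_iff zero_index)
      have ev: "\<forall>\<^sub>F k in sequentially. \<forall>i. wstar $ i \<noteq> 0 \<longrightarrow> w k $ i \<noteq> 0"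
      proof (rule eventually_all_finite)
        fix i
        show "\<forall>\<^sub>F k in sequentially. wstar $ i \<noteq> 0 \<longrightarrow> w k $ i \<noteq> 0"
        proof (cases "wstar $ i = 0")
          case True thus ?thesis by simp
        next
          case False
          have "\<forall>\<^sub>F k in sequentially. w k $ i \<noteq> 0"
            by (rule tendsto_imp_eventually_ne[OF tendsto_vec_nth[OF w_lim] False])
          thus ?thesis by (rule eventually_mono) simp
        qed
      qed
      have ineq: "\<forall>\<^sub>F k in sequentially. - eh k * (norm z)^2 \<le> z \<bullet> (hess (w k) *v z)"
      proof (rule eventually_mono[OF ev])
        fix k assume wk: "\<forall>i. wstar $ i \<noteq> 0 \<longrightarrow> w k $ i \<noteq> 0"
        have zs: "\<forall>i. i \<notin> support (w k) \<longrightarrow> z $ i = 0"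
          using wk z unfolding support_def critical_cone_def by auto
        have ne: "support (w k) \<noteq> {}" using zs j by auto
        have sym: "\<And>u v. u \<bullet> (hess (w k) *v v) = v \<bullet> (hess (w k) *v u)"
          by (rule hess_sym[OF fderiv gderiv])
        have "lambda_min (hess (w k)) (support (w k)) * (norm z)^2 \<le> z \<bullet> (hess (w k) *v z)"
          by (rule eig_lower[OF sym ne zs])
        moreover have "- eh k * (norm z)^2 \<le> lambda_min (hess (w k)) (support (w k)) * (norm z)^2"
          using second_order[OF ne] by (intro mult_right_mono) auto
        ultimately show "- eh k * (norm z)^2 \<le> z \<bullet> (hess (w k) *v z)" by linarith
      qed
      have hl: "(\<lambda>k. hess (w k)) \<longlonglongrightarrow> hess wstar"
        by (rule continuous_on_tendsto_compose[OF hcont w_lim]) auto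
      have "(\<lambda>k. z \<bullet> (hess (w k) *v z)) \<longlonglongrightarrow> z \<bullet> (hess wstar *v z)"
        by (rule quad_tendsto[OF hl])
      moreover have "(\<lambda>k. - eh k * (norm z)^2) \<longlonglongrightarrow> - 0 * (norm z)^2"
        by (intro tendsto_intros eh_lim)
      ultimately show ?thesis
        using tendsto_le[OF trivial_limit_sequentially _ _ ineq] by simp
    qed
  qed
qed

end
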